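(* Let $(M,S)$ be a spin$^c$ pair in standard form, with diagonal blocks of degrees $k,l,r$ ($k+l=|S|$, $n=k+l+r$), and let $k+l<m\le n$. Then there is $a\in\{2,3\}$ such that the $m$-th row of $M$ has the form $M_m=[\,a,\dots,a,\ \bar a,\dots,\bar a,\ *\,]$ (first $k$ entries equal to $a$, next $l$ entries equal to $\bar a$), and $k\cdot a+l\cdot\bar a+(k-l-1)\cdot 2=a$ in $\mathcal S$ (integer multiples taken in the $\mathbb Z_2$-vector space $\mathcal S$).
   Context: $\mathcal S=\{0,1,2,3\}$ is the Klein four-group ($\mathbb Z_2$-vector space) with $x+x=0$, $1+2=3$, $1+3=2$, $2+3=1$; conjugation is the involution $\bar0=0,\bar1=1,\bar2=3,\bar3=2$. $\mathcal P_n$ is the power set of $\{1,\dots,n\}$ (addition = symmetric difference); $|U|_2=|U|\bmod2$; $J_M(U)=\{j:\sum_{i\in U}M_{ij}=1\}$; $r_i^S(M)=\sum_{j\in S}M_{ij}$. $(M,S)$ is a spin$^c$ pair if $|(J_M(U)+U)\cap S|_2=\binom{|U|}2\bmod 2$ for all $U\in\mathcal P_n$. A square matrix is distinguished if it has $1$ on the diagonal and $2$ or $3$ off it; self-conjugate if $A^t=\overline A$. A spin$^c$ pair $(M,S)$ is in standard form if: (i) $S=\{1,\dots,|S|\}$; (ii) the first row of $M$ is $[1,2,\dots,2]$; (iii) $M$ is distinguished with block form $\begin{bmatrix}A&2&*\\2&B&*\\ *&*&*\end{bmatrix}$ with diagonal blocks of degrees $k,l,r$ (the blocks marked $2$ have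 all entries $2$); (iv) $k\ge l$ and $k+l=|S|$; (v) $A,B$ are self-conjugate; (vi) $r_1^S(M)=\dots=r_k^S(M)\ne r_{k+1}^S(M)=\dots=r_{k+l}^S(M)$ (possibly $l=0$). *)

theory Defs
  imports Main
begin

datatype ks = S0 | S1 | S2 | S3

fun ks_add :: "ks \<Rightarrow> ks \<Rightarrow> ks" where
  "ks_add S0 y = y"
| "ks_add x S0 = x"
| "ks_add S1 S1 = S0" | "ks_add S1 S2 = S3" | "ks_add S1 S3 = S2"
| "ks_add S2 S1 = S3" | "ks_add S2 S2 = S0" | "ks_add S2 S3 = S1"
| "ks_add S3 S1 = S2" | "ks_add S3 S2 = S1" | "ks_add S3 S3 = S0"

instantiation ks :: ab_group_add
begin
definition "zero_ks = S0"
definition "plus_ks = ks_add"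
definition "uminus_ks = (\<lambda>x::ks. x)"
definition "minus_ks = ks_add"
instance
proof
  fix a b c :: ks
  show "a + b + c = a + (b + c)"
    unfolding plus_ks_def by (cases a; cases b; cases c) auto
  show "a + b = b + a"
    unfolding plus_ks_def by (cases a; cases b) auto
  show "0 + a = a"
    unfolding plus_ks_def zero_ks_def by simp
  show "- a + a = 0"
    unfolding plus_ks_def zero_ks_def uminus_ks_def by (cases a) auto
  show "a - b = a + - b"
    unfolding plus_ks_def minus_ks_def uminus_ks_def by simp
qed
end

fun ks_conj :: "ks \<Rightarrow> ks" where
  "ks_conj S0 = S0" | "ks_conj S1 = S1" | "ks_conj S2 = S3" | "ks_conj S3 = S2"

definition ks_zmult :: "int \<Rightarrow> ks \<Rightarrow> ks" where
  "ks_zmult z x = (if odd z then x else 0)"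

text \<open>Matrices over \<S> of degree n: functions nat \<Rightarrow> nat \<Rightarrow> ks, indices 1..n.\<close>

definition J_M :: "nat \<Rightarrow> (nat \<Rightarrow> nat \<Rightarrow> ks) \<Rightarrow> nat set \<Rightarrow> nat set" where
  "J_M n M U = {j \<in> {1..n}. (\<Sum>i\<in>U. M i j) = S1}"

definition row_sum :: "(nat \<Rightarrow> nat \<Rightarrow> ks) \<Rightarrow> nat set \<Rightarrow> nat \<Rightarrow> ks" where
  "row_sum M S i = (\<Sum>j\<in>S. M i j)"

definition spinc_pair :: "nat \<Rightarrow> (nat \<Rightarrow> nat \<Rightarrow> ks) \<Rightarrow> nat set \<Rightarrow> bool" where
  "spinc_pair n M S \<longleftrightarrow> S \<subseteq> {1..n} \<and>
     (\<forall>U. U \<subseteq> {1..n} \<longrightarrow>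
        card ((J_M n M U - U \<union> (U - J_M n M U)) \<inter> S) mod 2 = (card U choose 2) mod 2)"

definition distinguished :: "nat \<Rightarrow> (nat \<Rightarrow> nat \<Rightarrow> ks) \<Rightarrow> bool" where
  "distinguished n M \<longleftrightarrow> (\<forall>i\<in>{1..n}. M i i = S1) \<and>
     (\<forall>i\<in>{1..n}. \<forall>j\<in>{1..n}. i \<noteq> j \<longrightarrow> M i j \<in> {S2, S3})"

definition self_conj_block :: "(nat \<Rightarrow> nat \<Rightarrow> ks) \<Rightarrow> nat set \<Rightarrow> bool" where
  "self_conj_block M I \<longleftrightarrow> (\<forall>i\<in>I. \<forall>j\<in>I. M j i = ks_conj (M i j))"

definition standard_form ::
  "nat \<Rightarrow> (nat \<Rightarrow> nat \<Rightarrow> ks) \<Rightarrow> nat set \<Rightarrow> nat \<Rightarrow> nat \<Rightarrow> nat \<Rightarrow> bool" where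
  "standard_form n M S k l r \<longleftrightarrow>
     spinc_pair n M S \<and>
     n = k + l + r \<and>
     S = {1..card S} \<and>
     M 1 1 = S1 \<and> (\<forall>j\<in>{2..n}. M 1 j = S2) \<and>
     distinguished n M \<and>
     (\<forall>i\<in>{1..k}. \<forall>j\<in>{k+1..k+l}. M i j = S2 \<and> M j i = S2) \<and>
     k \<ge> l \<and> k + l = card S \<and>
     self_conj_block M {1..k} \<and> self_conj_block M {k+1..k+l} \<and>
     (\<forall>i\<in>{1..k}. row_sum M S i = row_sum M S 1) \<and>
     (\<forall>i\<in>{k+1..k+l}. row_sum M S i = row_sum M S (k+1)) \<and>
     (l > 0 \<longrightarrow> row_sum M S 1 \<noteq> row_sum M S (k+1))"

end

theory Submission
  imports Defs
begin

lemma ks3_ne1: "x \<in> {S2,S3} \<Longrightarrow> y \<in> {S2,S3} \<Longrightarrow> z \<in> {S2,S3} \<Longrightarrow> x + (y + z) \<noteq> S1"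
  by (auto simp: plus_ks_def)

lemma ks_S1a: "y \<in> {S2,S3} \<Longrightarrow> z \<in> {S2,S3} \<Longrightarrow> (S1 + (y + z) = S1) = (y = z)"
  by (auto simp: plus_ks_def)

lemma ks_S1b: "y \<in> {S2,S3} \<Longrightarrow> z \<in> {S2,S3} \<Longrightarrow> (y + (S1 + z) = S1) = (y = z)"
  by (auto simp: plus_ks_def)

lemma ks2_ne1: "x \<in> {S2,S3} \<Longrightarrow> y \<in> {S2,S3} \<Longrightarrow> (x + y = S1) = (x \<noteq> y)"
  by (auto simp: plus_ks_def)

lemma ks2_ne1b: "y \<in> {S2,S3} \<Longrightarrow> S1 + y \<noteq> S1" "y \<in> {S2,S3} \<Longrightarrow> y + S1 \<noteq> S1"
  by (auto simp: plus_ks_def)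

lemma triple:
  assumes sp: "spinc_pair n M S" and d: "distinguished n M"
    and i: "i \<in> S" and j: "j \<in> S" and m: "m \<in> {1..n}" "m \<notin> S" and ij: "i \<noteq> j"
  shows "(M j i \<noteq> M m i) \<noteq> (M i j \<noteq> M m j)"
proof -
  have Sn: "S \<subseteq> {1..n}" using sp unfolding spinc_pair_def by blast
  have im: "i \<noteq> m" "j \<noteq> m" using i j m by auto
  define U where "U = {i,j,m}"
  have Un: "U \<subseteq> {1..n}" using Sn i j m U_def by auto
  have cU: "card U = 3" using ij im U_def by simp
  have par: "card ((J_M n M U - U \<union> (U - J_M n M U)) \<inter> S) mod 2 = (card U choose 2) mod 2"
    using sp Un unfolding spinc_pair_def by blast
  have sumU: "\<And>t. (\<Sum>x\<in>U. M x t) = M i t + (M j t + M m t)"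
    using ij im U_def by simp
  have off: "\<And>x t. x \<in> {1..n} \<Longrightarrow> t \<in> {1..n} \<Longrightarrow> x \<noteq> t \<Longrightarrow> M x t \<in> {S2,S3}"
    using d unfolding distinguished_def by blast
  have diag: "\<And>x. x \<in> {1..n} \<Longrightarrow> M x x = S1"
    using d unfolding distinguished_def by blast
  have iin: "i \<in> {1..n}" "j \<in> {1..n}" using i j Sn by auto
  have D: "(J_M n M U - U \<union> (U - J_M n M U)) \<inter> S =
      (if M j i \<noteq> M m i then {i} else {}) \<union> (if M i j \<noteq> M m j then {j} else {})"
  proof (rule set_eqI)
    fix t
    show "t \<in> (J_M n M U - U \<union> (U - J_M n M U)) \<inter> S \<longleftrightarrow>
      t \<in> (if M j i \<noteq> M m i then {i} else {}) \<union> (if M i j \<noteq> M m j then {j} else {})"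
    proof (cases "t \<in> U")
      case False
      then have tt: "t \<noteq> i" "t \<noteq> j" "t \<noteq> m" using U_def by auto
      show ?thesis
      proof (cases "t \<in> S")
        case True
        then have tn: "t \<in> {1..n}" using Sn by auto
        have "(\<Sum>x\<in>U. M x t) \<noteq> S1"
          using sumU ks3_ne1 off[OF iin(1) tn] off[OF iin(2) tn] off[OF m(1) tn] tt by simp
        then show ?thesis using tt False by (auto simp: J_M_def)
      qed (use tt in auto)
    next
      case True
      then have "t = i \<or> t = j \<or> t = m" using U_def by auto
      moreover
      { assume "t = i"
        then have "(\<Sum>x\<in>U. M x t) = S1 \<longleftrightarrow> M j i = M m i"
          using sumU diag[OF iin(1)] ks_S1a off iin m im ij by simp
        then have ?thesis using \<open>t = i\<close> True i ij iin by (auto simp: J_M_def) }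
      moreover
      { assume "t = j"
        then have "(\<Sum>x\<in>U. M x t) = S1 \<longleftrightarrow> M i j = M m j"
          using sumU diag[OF iin(2)] ks_S1b off iin m im ij by simp
        then have ?thesis using \<open>t = j\<close> True j ij iin by (auto simp: J_M_def) }
      moreover
      { assume "t = m"
        then have ?thesis using m im by auto }
      ultimately show ?thesis by blast
    qed
  qed
  show ?thesis
  proof (rule ccontr)
    assume "\<not> ?thesis"
    then have "(M j i \<noteq> M m i) = (M i j \<noteq> M m j)" by blast
    then have "card ((J_M n M U - U \<union> (U - J_M n M U)) \<inter> S) mod 2 = 0"
      unfolding D using ij by (cases "M j i \<noteq> M m i") auto
    moreover have "(3::nat) choose 2 = 3" by (simp add: numeral_eq_Suc)
    ultimately show False using par cU by simp
  qed
qed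

lemma pair:
  assumes sp: "spinc_pair n M S" and d: "distinguished n M"
    and i: "i \<in> S" and m: "m \<in> {1..n}" "m \<notin> S" and fin: "finite S"
  shows "odd (card ({i} \<union> {t \<in> S. t \<noteq> i \<and> M i t \<noteq> M m t}))"
proof -
  have Sn: "S \<subseteq> {1..n}" using sp unfolding spinc_pair_def by blast
  have im: "i \<noteq> m" using i m by auto
  define U where "U = {i,m}"
  have Un: "U \<subseteq> {1..n}" using Sn i m U_def by auto
  have cU: "card U = 2" using im U_def by simp
  have par: "card ((J_M n M U - U \<union> (U - J_M n M U)) \<inter> S) mod 2 = (card U choose 2) mod 2"
    using sp Un unfolding spinc_pair_def by blast
  have sumU: "\<And>t. (\<Sum>x\<in>U. M x t) = M i t + M m t"
    using im U_def by simp
  have off: "\<And>x t. x \<in> {1..n} \<Longrightarrow> t \<in> {1..n} \<Longrightarrow> x \<noteq> t \<Longrightarrow> M x t \<in> {S2,S3}"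
    using d unfolding distinguished_def by blast
  have diag: "\<And>x. x \<in> {1..n} \<Longrightarrow> M x x = S1"
    using d unfolding distinguished_def by blast
  have iin: "i \<in> {1..n}" using i Sn by auto
  have D: "(J_M n M U - U \<union> (U - J_M n M U)) \<inter> S = {i} \<union> {t \<in> S. t \<noteq> i \<and> M i t \<noteq> M m t}"
  proof (rule set_eqI)
    fix t
    show "t \<in> (J_M n M U - U \<union> (U - J_M n M U)) \<inter> S \<longleftrightarrow> t \<in> {i} \<union> {t \<in> S. t \<noteq> i \<and> M i t \<noteq> M m t}"
    proof (cases "t \<in> U")
      case False
      then have tt: "t \<noteq> i" "t \<noteq> m" using U_def by auto
      show ?thesis
      proof (cases "t \<in> S")
        case True
        then have tn: "t \<in> {1..n}" using Sn by auto
        have "(\<Sum>x\<in>U. M x t) = S1 \<longleftrightarrow> M i t \<noteq> M m t"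
          using sumU ks2_ne1 off[OF iin tn] off[OF m(1) tn] tt by simp
        then show ?thesis using True tt tn False by (auto simp: J_M_def)
      qed (use tt in auto)
    next
      case True
      then have "t = i \<or> t = m" using U_def by auto
      moreover
      { assume "t = i"
        then have "(\<Sum>x\<in>U. M x t) \<noteq> S1"
          using sumU diag[OF iin] ks2_ne1b off iin m im by simp
        then have ?thesis using \<open>t = i\<close> True i by (auto simp: J_M_def) }
      moreover
      { assume "t = m"
        then have ?thesis using m im by auto }
      ultimately show ?thesis by blast
    qed
  qed
  show ?thesis using par cU unfolding D by (simp add: odd_iff_mod_2_eq_one)
qed

theorem mainTheorem13:
  fixes n k l r m :: nat and M :: "nat \<Rightarrow> nat \<Rightarrow> ks" and S :: "nat set"
  assumes "standard_form n M S k l r"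
    and "k + l < m" and "m \<le> n"
  shows "\<exists>a\<in>{S2, S3}.
           (\<forall>j\<in>{1..k}. M m j = a) \<and>
           (\<forall>j\<in>{k+1..k+l}. M m j = ks_conj a) \<and>
           ks_zmult (int k) a + ks_zmult (int l) (ks_conj a)
             + ks_zmult (int k - int l - 1) S2 = a"
proof -
  note sf = assms(1)[unfolded standard_form_def]
  have sp: "spinc_pair n M S" and d: "distinguished n M" and Seq: "S = {1..k+l}"
    and r1: "\<forall>j\<in>{2..n}. M 1 j = S2" and blk: "\<forall>i\<in>{1..k}. \<forall>j\<in>{k+1..k+l}. M i j = S2 \<and> M j i = S2"
    and kl: "l \<le> k" and sc: "self_conj_block M {1..k}" and nn: "n = k + l + r"
    using sf by auto
  have mS: "m \<notin> S" "m \<in> {1..n}" using Seq assms(2,3) by auto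
  have off: "\<And>x t. x \<in> {1..n} \<Longrightarrow> t \<in> {1..n} \<Longrightarrow> x \<noteq> t \<Longrightarrow> M x t \<in> {S2,S3}"
    using d unfolding distinguished_def by blast
  show ?thesis
  proof (cases "k = 0")
    case True
    then have "l = 0" using kl by simp
    then show ?thesis using True by (auto simp: ks_zmult_def zero_ks_def plus_ks_def)
  next
    case False
    define a where "a = M m 1"
    have 1: "1 \<in> S" using False Seq by auto
    have aS: "a \<in> {S2,S3}" unfolding a_def using off[OF mS(2), of 1] mS False nn assms(2) by auto
    have A: "\<forall>j\<in>{1..k}. M m j = a"
    proof
      fix j assume j: "j \<in> {1..k}"
      show "M m j = a"
      proof (cases "j = 1")
        case False
        have jS: "j \<in> S" using j Seq by auto
        have "M 1 j = S2" using r1 j False nn by auto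
        moreover have "M j 1 = ks_conj (M 1 j)" 
          using bspec[OF bspec[OF sc[unfolded self_conj_block_def]] j] \<open>k \<noteq> 0\<close> by simp
        moreover have "M m j \<in> {S2,S3}" using off[OF mS(2), of j] j mS nn jS Seq by auto
        ultimately show ?thesis using triple[OF sp d 1 jS mS(2) mS(1)] False aS unfolding a_def by auto
      qed (simp add: a_def)
    qed
    have B: "\<forall>j\<in>{k+1..k+l}. M m j = ks_conj a"
    proof
      fix j assume j: "j \<in> {k+1..k+l}"
      have jS: "j \<in> S" using j Seq by auto
      have "M 1 j = S2" "M j 1 = S2" using blk j \<open>k \<noteq> 0\<close> by auto
      moreover have "M m j \<in> {S2,S3}" using off[OF mS(2), of j] j mS nn jS Seq by auto
      moreover have "j \<noteq> 1" using j \<open>k \<noteq> 0\<close> by auto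
      ultimately show "M m j = ks_conj a" using triple[OF sp d 1 jS mS(2) mS(1)] aS unfolding a_def by auto
    qed
    have P: "odd (card ({1} \<union> {t \<in> S. t \<noteq> 1 \<and> M 1 t \<noteq> M m t}))"
      using pair[OF sp d 1 mS(2) mS(1)] Seq by simp
    show ?thesis
    proof (cases "a = S2")
      case True
      have "{t \<in> S. t \<noteq> 1 \<and> M 1 t \<noteq> M m t} = {k+1..k+l}"
      proof (rule set_eqI)
        fix t
        show "t \<in> {t \<in> S. t \<noteq> 1 \<and> M 1 t \<noteq> M m t} \<longleftrightarrow> t \<in> {k+1..k+l}"
        proof (cases "t \<in> S \<and> t \<noteq> 1")
          case T: True
          then have "M 1 t = S2" using r1 Seq nn by auto
          moreover have "t \<le> k \<Longrightarrow> M m t = S2" using A T True Seq by auto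
          moreover have "t > k \<Longrightarrow> M m t = S3" using B T True Seq by auto
          ultimately show ?thesis using T Seq by (cases "t \<le> k") auto
        qed (use Seq \<open>k \<noteq> 0\<close> in auto)
      qed
      then have "odd (Suc l)" using P False by simp
      then show ?thesis using True A B False
        by (auto simp: ks_zmult_def zero_ks_def plus_ks_def)
    next
      case F2: False
      then have a3: "a = S3" using aS by auto
      have "{t \<in> S. t \<noteq> 1 \<and> M 1 t \<noteq> M m t} = {2..k}"
      proof (rule set_eqI)
        fix t
        show "t \<in> {t \<in> S. t \<noteq> 1 \<and> M 1 t \<noteq> M m t} \<longleftrightarrow> t \<in> {2..k}"
        proof (cases "t \<in> S \<and> t \<noteq> 1")
          case T: True
          then have "M 1 t = S2" using r1 Seq nn by auto
          moreover have "t \<le> k \<Longrightarrow> M m t = S3" using A T a3 Seq by auto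
          moreover have "t > k \<Longrightarrow> M m t = S2" using B T a3 Seq by auto
          ultimately show ?thesis using T Seq by (cases "t \<le> k") auto
        qed (use Seq in auto)
      qed
      then have "odd (Suc (k - 1))" using P False by simp
      then show ?thesis using a3 A B False
        by (auto simp: ks_zmult_def zero_ks_def plus_ks_def)
    qed
  qed
qed

end
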